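(* Let $\langle M,\mathsf{S}\rangle$ be a sum structure, $x\in M$, and $\mathcal{A}$ a non-empty family of subsets of $M$ such that $x\,\mathsf{S}\,A$ for every $A\in\mathcal{A}$. Then $x\,\mathsf{S}\,\bigcup\mathcal{A}$.
   Context: For a set $M$ and a relation $\mathsf{S}\subseteq M\times\mathcal{P}(M)$ define: $x\sqsubseteq_{\mathsf{S}} y$ iff there is $X\subseteq M$ with $y\,\mathsf{S}\,X$ and $x\in X$; $\mathrm{I}(x)=\{y\in M\mid y\sqsubseteq_{\mathsf{S}} x\}$ and for $A\subseteq M$, $\mathrm{I}(A)=\bigcup_{a\in A}\mathrm{I}(a)$; $x$ s-overlaps $y$ iff there are $X,Y\subseteq M$ with $x\,\mathsf{S}\,X$, $y\,\mathsf{S}\,Y$, $X\cap Y\neq\emptyset$; a set $A\subseteq M$ is pre-dense in $B\subseteq M$ iff for every $b\in B$ there is $a\in A$ such that $a$ s-overlaps $b$. A sum structure is a pair $\langle M,\mathsf{S}\rangle$ satisfying: (S1) for every non-empty $X\subseteq M$ there is $x\in M$ with $x\,\mathsf{S}\,X$; (S2) $x\,\mathsf{S}\,X\wedge y\,\mathsf{S}\,X\to x=y$; (S3) $x\,\mathsf{S}\,X\wedge y\,\mathsf{S}\,Y\wedge x\in Y\to y\,\mathsf{S}\,(X\cup Y)$; (S4) if $x\,\mathsf{S}\,X$, $x\,\mathsf{S}\,Y$ and $y\in Y$, then there are $z\in X$ and $Z,U\subseteq M$ with $z\,\mathsf{S}\,Z$, $y\,\mathsf{S}\,U$ and $Z\cap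 U\neq\emptyset$; (S5) for all $x\in M$ and $X\subseteq M$: if $X$ is pre-dense in $\mathrm{I}(x)$ then $x\,\mathsf{S}\,(\mathrm{I}(x)\cap\mathrm{I}(X))$. *)

theory Defs
  imports Main
begin

definition below :: "'a set \<Rightarrow> ('a \<Rightarrow> 'a set \<Rightarrow> bool) \<Rightarrow> 'a \<Rightarrow> 'a \<Rightarrow> bool" where
  "below M S x y \<longleftrightarrow> (\<exists>X. X \<subseteq> M \<and> S y X \<and> x \<in> X)"

definition ideal :: "'a set \<Rightarrow> ('a \<Rightarrow> 'a set \<Rightarrow> bool) \<Rightarrow> 'a \<Rightarrow> 'a set" where
  "ideal M S x = {y \<in> M. below M S y x}"

definition ideal_set :: "'a set \<Rightarrow> ('a \<Rightarrow> 'a set \<Rightarrow> bool) \<Rightarrow> 'a set \<Rightarrow> 'a set" where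
  "ideal_set M S A = (\<Union>a\<in>A. ideal M S a)"

definition s_overlaps :: "'a set \<Rightarrow> ('a \<Rightarrow> 'a set \<Rightarrow> bool) \<Rightarrow> 'a \<Rightarrow> 'a \<Rightarrow> bool" where
  "s_overlaps M S x y \<longleftrightarrow>
     (\<exists>X Y. X \<subseteq> M \<and> Y \<subseteq> M \<and> S x X \<and> S y Y \<and> X \<inter> Y \<noteq> {})"

definition pre_dense :: "'a set \<Rightarrow> ('a \<Rightarrow> 'a set \<Rightarrow> bool) \<Rightarrow> 'a set \<Rightarrow> 'a set \<Rightarrow> bool" where
  "pre_dense M S A B \<longleftrightarrow> (\<forall>b\<in>B. \<exists>a\<in>A. s_overlaps M S a b)"

definition sum_structure :: "'a set \<Rightarrow> ('a \<Rightarrow> 'a set \<Rightarrow> bool) \<Rightarrow> bool" where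
  "sum_structure M S \<longleftrightarrow>
     (\<forall>x X. S x X \<longrightarrow> x \<in> M \<and> X \<subseteq> M) \<and>
     (\<forall>X. X \<subseteq> M \<and> X \<noteq> {} \<longrightarrow> (\<exists>x\<in>M. S x X)) \<and>
     (\<forall>x y X. x \<in> M \<and> y \<in> M \<and> X \<subseteq> M \<and> S x X \<and> S y X \<longrightarrow> x = y) \<and>
     (\<forall>x y X Y. x \<in> M \<and> y \<in> M \<and> X \<subseteq> M \<and> Y \<subseteq> M \<and> S x X \<and> S y Y \<and> x \<in> Y
        \<longrightarrow> S y (X \<union> Y)) \<and>
     (\<forall>x y X Y. x \<in> M \<and> y \<in> M \<and> X \<subseteq> M \<and> Y \<subseteq> M \<and> S x X \<and> S x Y \<and> y \<in> Y
        \<longrightarrow> (\<exists>z\<in>X. \<exists>Z U. Z \<subseteq> M \<and> U \<subseteq> M \<and> S z Z \<and> S y U \<and> Z \<inter> U \<noteq> {})) \<and>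
     (\<forall>x X. x \<in> M \<and> X \<subseteq> M \<and> pre_dense M S X (ideal M S x)
        \<longrightarrow> S x (ideal M S x \<inter> ideal_set M S X))"

end

theory Submission
  imports Defs
begin

theorem theorem3p8:
  fixes M :: "'a set" and S :: "'a \<Rightarrow> 'a set \<Rightarrow> bool"
    and x :: 'a and \<A> :: "'a set set"
  assumes "sum_structure M S"
    and "x \<in> M"
    and "\<A> \<noteq> {}"
    and "\<forall>A\<in>\<A>. A \<subseteq> M"
    and "\<forall>A\<in>\<A>. S x A"
  shows "S x (\<Union>\<A>)"
proof -
  note ss = assms(1)[unfolded sum_structure_def]
  have S1: "\<And>X. X \<subseteq> M \<Longrightarrow> X \<noteq> {} \<Longrightarrow> \<exists>x\<in>M. S x X" using conjunct1[OF conjunct2[OF ss]] by blast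
  have S2: "\<And>x y X. x \<in> M \<Longrightarrow> y \<in> M \<Longrightarrow> X \<subseteq> M \<Longrightarrow> S x X \<Longrightarrow> S y X \<Longrightarrow> x = y" using conjunct1[OF conjunct2[OF conjunct2[OF ss]]] by blast
  have S3: "\<And>x y X Y. x \<in> M \<Longrightarrow> y \<in> M \<Longrightarrow> X \<subseteq> M \<Longrightarrow> Y \<subseteq> M \<Longrightarrow> S x X \<Longrightarrow> S y Y \<Longrightarrow> x \<in> Y \<Longrightarrow> S y (X \<union> Y)" using conjunct1[OF conjunct2[OF conjunct2[OF conjunct2[OF ss]]]] by blast
  have S4: "\<And>x y X Y. x \<in> M \<Longrightarrow> y \<in> M \<Longrightarrow> X \<subseteq> M \<Longrightarrow> Y \<subseteq> M \<Longrightarrow> S x X \<Longrightarrow> S x Y \<Longrightarrow> y \<in> Y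
        \<Longrightarrow> (\<exists>z\<in>X. \<exists>Z U. Z \<subseteq> M \<and> U \<subseteq> M \<and> S z Z \<and> S y U \<and> Z \<inter> U \<noteq> {})" using conjunct1[OF conjunct2[OF conjunct2[OF conjunct2[OF conjunct2[OF ss]]]]] by (intro mp[OF spec[OF spec[OF spec[OF spec[OF conjunct1[OF conjunct2[OF conjunct2[OF conjunct2[OF conjunct2[OF ss]]]]]]]]]] conjI)
  have S5: "\<And>x X. x \<in> M \<Longrightarrow> X \<subseteq> M \<Longrightarrow> pre_dense M S X (ideal M S x)
        \<Longrightarrow> S x (ideal M S x \<inter> ideal_set M S X)" using conjunct2[OF conjunct2[OF conjunct2[OF conjunct2[OF conjunct2[OF ss]]]]] by (intro mp[OF spec[OF spec[OF conjunct2[OF conjunct2[OF conjunct2[OF conjunct2[OF conjunct2[OF ss]]]]]]]] conjI)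
  obtain A0 where A0: "A0 \<in> \<A>" using assms(3) by blast
  define U where "U = \<Union>\<A>"
  have UM: "U \<subseteq> M" using assms(4) U_def by blast
  show ?thesis
  proof (cases "U = {}")
    case True
    then have "A0 = {}" using A0 U_def by blast
    moreover have "S x A0" using assms(5) A0 by blast
    ultimately have "S x U" using True by simp
    then show ?thesis using U_def by simp
  next
    case False
    obtain y where y: "y \<in> M" "S y U" using S1[OF UM False] by blast
    have Iy: "ideal M S y \<inter> ideal_set M S U = ideal_set M S U"
    proof -
      have "ideal_set M S U \<subseteq> ideal M S y"
      proof
        fix w assume "w \<in> ideal_set M S U"
        then obtain u W where u: "u \<in> U" "w \<in> M" "W \<subseteq> M" "S u W" "w \<in> W"
          unfolding ideal_set_def ideal_def below_def by blast
        have "S y (W \<union> U)" using S3[of u y W U] u UM y by blast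
        moreover have "W \<union> U \<subseteq> M" using u UM by blast
        ultimately show "w \<in> ideal M S y" unfolding ideal_def below_def using u(2,5) by blast
      qed
      then show ?thesis by blast
    qed
    have Ix: "ideal M S x \<inter> ideal_set M S U = ideal_set M S U"
    proof -
      have "ideal_set M S U \<subseteq> ideal M S x"
      proof
        fix w assume "w \<in> ideal_set M S U"
        then obtain u W where u: "u \<in> U" "w \<in> M" "W \<subseteq> M" "S u W" "w \<in> W"
          unfolding ideal_set_def ideal_def below_def by blast
        then obtain A where A: "A \<in> \<A>" "u \<in> A" using U_def by blast
        have "S x (W \<union> A)" using S3[of u x W A] u A assms(2,4,5) UM by blast
        moreover have "W \<union> A \<subseteq> M" using u A assms(4) by blast
        ultimately show "w \<in> ideal M S x" unfolding ideal_def below_def using u(2,5) by blast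
      qed
      then show ?thesis by blast
    qed
    have A0M: "A0 \<subseteq> M" using A0 assms(4) by blast
    have SxA0: "S x A0" using A0 assms(5) by blast
    have pdx: "pre_dense M S U (ideal M S x)"
      unfolding pre_dense_def
    proof
      fix b assume "b \<in> ideal M S x"
      then obtain Y where Y: "b \<in> M" "Y \<subseteq> M" "S x Y" "b \<in> Y"
        unfolding ideal_def below_def by blast
      have "\<exists>z\<in>A0. \<exists>Z U'. Z \<subseteq> M \<and> U' \<subseteq> M \<and> S z Z \<and> S b U' \<and> Z \<inter> U' \<noteq> {}"
        using S4[OF assms(2) Y(1) A0M Y(2) SxA0 Y(3) Y(4)] .
      then obtain z Z U' where "z \<in> A0" "Z \<subseteq> M" "U' \<subseteq> M" "S z Z" "S b U'" "Z \<inter> U' \<noteq> {}" by blast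
      moreover have "z \<in> U" using \<open>z \<in> A0\<close> A0 U_def by blast
      ultimately show "\<exists>a\<in>U. s_overlaps M S a b" unfolding s_overlaps_def by blast
    qed
    have pdy: "pre_dense M S U (ideal M S y)"
      unfolding pre_dense_def
    proof
      fix b assume "b \<in> ideal M S y"
      then obtain Y where Y: "b \<in> M" "Y \<subseteq> M" "S y Y" "b \<in> Y"
        unfolding ideal_def below_def by blast
      have "\<exists>z\<in>U. \<exists>Z U'. Z \<subseteq> M \<and> U' \<subseteq> M \<and> S z Z \<and> S b U' \<and> Z \<inter> U' \<noteq> {}"
        using S4[OF y(1) Y(1) UM Y(2) y(2) Y(3) Y(4)] .
      then obtain z Z U' where "z \<in> U" "Z \<subseteq> M" "U' \<subseteq> M" "S z Z" "S b U'" "Z \<inter> U' \<noteq> {}" by blast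
      then show "\<exists>a\<in>U. s_overlaps M S a b" unfolding s_overlaps_def by blast
    qed
    have "S x (ideal_set M S U)" using S5[OF assms(2) UM pdx] Ix by simp
    moreover have "S y (ideal_set M S U)" using S5[OF y(1) UM pdy] Iy by simp
    moreover have "ideal_set M S U \<subseteq> M" unfolding ideal_set_def ideal_def by blast
    ultimately have "x = y" using S2 assms(2) y by blast
    then show ?thesis using y U_def by simp
  qed
qed

end
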